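(* Let $L:\mathcal{A}\to \mathcal{B}$ and $R:\mathcal{B}\to \mathcal{A}$ be contravariant functors between abelian categories. (1) Assume that $(L,R)$ is a left adjoint pair, i.e. there are natural isomorphisms ${\rm Hom}_{\mathcal{B}}(L(A),B)\cong {\rm Hom}_{\mathcal{A}}(R(B),A)$, with associated natural transformations $\varepsilon:LR\to 1_{\mathcal{B}}$ and $\eta:RL\to 1_{\mathcal{A}}$. Let $M,N$ be objects of $\mathcal{B}$ with $M,N\in {\rm Refl}(R)$. Then the following are equivalent: (i) $N$ is strongly $M$-Rickart in $\mathcal{B}$; (ii) $R(M)$ is dual strongly $R(N)$-Rickart in $\mathcal{A}$ and for every morphism $f:M\to N$, ${\rm Ker}(f)$ is $M$-cyclic; (iii) $R(M)$ is dual strongly $R(N)$-Rickart in $\mathcal{A}$ and for every morphism $f:M\to N$, ${\rm Ker}(f)\in {\rm Refl}(R)$. (2) Assume that $(L,R)$ is a right adjoint pair, i.e. there are natural isomorphisms ${\rm Hom}_{\mathcal{A}}(A,R(B))\cong {\rm Hom}_{\mathcal{B}}(B,L(A))$, with associated natural transformations $\varepsilon:1_{\mathcal{B}}\to LR$ and $\eta:1_{\mathcal{A}}\to RL$. Let $M,N$ be objects of $\mathcal{A}$ with $M,N\in {\rm Refl}(L)$. Then the following are equivalent: (i) $N$ is dual strongly $M$-Rickart in $\mathcal{A}$; (ii) $L(M)$ is strongly $L(N)$-Rickart in $\mathcal{B}$ and for every morphism $f:M\to N$, ${\rm Coker}(f)$ is $N$-cocyclic; (iii) $L(M)$ is strongly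 $L(N)$-Rickart in $\mathcal{B}$ and for every morphism $f:M\to N$, ${\rm Coker}(f)\in {\rm Refl}(L)$.
   Context: ${\rm Refl}(R)$ is the class of objects $B$ of $\mathcal{B}$ for which $\varepsilon_B$ is an isomorphism ($R$-reflexive objects); ${\rm Refl}(L)$ is the class of objects $A$ of $\mathcal{A}$ for which $\eta_A$ is an isomorphism ($L$-reflexive objects). For objects $X,Y$, $Y$ is $X$-cyclic if there is an epimorphism $X\to Y$, and $X$ is $Y$-cocyclic if there is a monomorphism $X\to Y$. A morphism $f:X\to Y$ is a section if $f'f=1_X$ for some $f'$, a retraction if $ff'=1_Y$ for some $f'$. A monomorphism $k:K\to X$ is fully invariant if for every $h:X\to X$ there is $\alpha:K\to K$ with $hk=k\alpha$; an epimorphism $c:X\to C$ is fully coinvariant if for every $h:X\to X$ there is $\gamma:C\to C$ with $ch=\gamma c$. $N$ is strongly $M$-Rickart if the kernel of every morphism $f:M\to N$ is a fully invariant section; $N$ is dual strongly $M$-Rickart if the cokernel of every morphism $f:M\to N$ is a fully coinvariant retraction. *)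

theory Defs
  imports Main
begin

record ('o,'m) cat =
  Ob  :: "'o set"
  Ar  :: "'m set"
  Dom :: "'m \<Rightarrow> 'o"
  Cod :: "'m \<Rightarrow> 'o"
  Cp  :: "'m \<Rightarrow> 'm \<Rightarrow> 'm"   (* Cp C g f = g \<circ> f *)
  Id  :: "'o \<Rightarrow> 'm"

definition hom :: "('o,'m) cat \<Rightarrow> 'o \<Rightarrow> 'o \<Rightarrow> 'm set" where
  "hom C A B = {f \<in> Ar C. Dom C f = A \<and> Cod C f = B}"

definition is_category :: "('o,'m) cat \<Rightarrow> bool" where
  "is_category C \<longleftrightarrow>
     (\<forall>f\<in>Ar C. Dom C f \<in> Ob C \<and> Cod C f \<in> Ob C) \<and>
     (\<forall>A\<in>Ob C. Id C A \<in> hom C A A) \<and>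
     (\<forall>f\<in>Ar C. \<forall>g\<in>Ar C. Cod C f = Dom C g \<longrightarrow> Cp C g f \<in> hom C (Dom C f) (Cod C g)) \<and>
     (\<forall>f\<in>Ar C. Cp C f (Id C (Dom C f)) = f \<and> Cp C (Id C (Cod C f)) f = f) \<and>
     (\<forall>f\<in>Ar C. \<forall>g\<in>Ar C. \<forall>h\<in>Ar C. Cod C f = Dom C g \<longrightarrow> Cod C g = Dom C h \<longrightarrow>
         Cp C h (Cp C g f) = Cp C (Cp C h g) f)"

definition mono :: "('o,'m) cat \<Rightarrow> 'm \<Rightarrow> bool" where
  "mono C f \<longleftrightarrow> f \<in> Ar C \<and>
     (\<forall>g\<in>Ar C. \<forall>h\<in>Ar C. Cod C g = Dom C f \<longrightarrow> Cod C h = Dom C f \<longrightarrow> Dom C g = Dom C h \<longrightarrow>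
        Cp C f g = Cp C f h \<longrightarrow> g = h)"

definition epi :: "('o,'m) cat \<Rightarrow> 'm \<Rightarrow> bool" where
  "epi C f \<longleftrightarrow> f \<in> Ar C \<and>
     (\<forall>g\<in>Ar C. \<forall>h\<in>Ar C. Dom C g = Cod C f \<longrightarrow> Dom C h = Cod C f \<longrightarrow> Cod C g = Cod C h \<longrightarrow>
        Cp C g f = Cp C h f \<longrightarrow> g = h)"

definition iso :: "('o,'m) cat \<Rightarrow> 'm \<Rightarrow> bool" where
  "iso C f \<longleftrightarrow> f \<in> Ar C \<and> (\<exists>g\<in>hom C (Cod C f) (Dom C f).
      Cp C g f = Id C (Dom C f) \<and> Cp C f g = Id C (Cod C f))"

definition "section" :: "('o,'m) cat \<Rightarrow> 'm \<Rightarrow> bool" where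
  "section C f \<longleftrightarrow> f \<in> Ar C \<and> (\<exists>f'\<in>hom C (Cod C f) (Dom C f). Cp C f' f = Id C (Dom C f))"

definition retraction :: "('o,'m) cat \<Rightarrow> 'm \<Rightarrow> bool" where
  "retraction C f \<longleftrightarrow> f \<in> Ar C \<and> (\<exists>f'\<in>hom C (Cod C f) (Dom C f). Cp C f f' = Id C (Cod C f))"

definition zero_obj :: "('o,'m) cat \<Rightarrow> 'o \<Rightarrow> bool" where
  "zero_obj C Z \<longleftrightarrow> Z \<in> Ob C \<and>
     (\<forall>A\<in>Ob C. (\<exists>!f. f \<in> hom C Z A) \<and> (\<exists>!f. f \<in> hom C A Z))"

definition zero_arr :: "('o,'m) cat \<Rightarrow> 'm \<Rightarrow> bool" where
  "zero_arr C f \<longleftrightarrow> f \<in> Ar C \<and> (\<exists>Z. zero_obj C Z \<and>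
     (\<exists>g\<in>hom C (Dom C f) Z. \<exists>h\<in>hom C Z (Cod C f). f = Cp C h g))"

definition is_kernel :: "('o,'m) cat \<Rightarrow> 'm \<Rightarrow> 'm \<Rightarrow> bool" where
  "is_kernel C f k \<longleftrightarrow> f \<in> Ar C \<and> k \<in> Ar C \<and> Cod C k = Dom C f \<and> zero_arr C (Cp C f k) \<and>
     (\<forall>g\<in>Ar C. Cod C g = Dom C f \<longrightarrow> zero_arr C (Cp C f g) \<longrightarrow>
        (\<exists>!u. u \<in> hom C (Dom C g) (Dom C k) \<and> Cp C k u = g))"

definition is_cokernel :: "('o,'m) cat \<Rightarrow> 'm \<Rightarrow> 'm \<Rightarrow> bool" where
  "is_cokernel C f c \<longleftrightarrow> f \<in> Ar C \<and> c \<in> Ar C \<and> Dom C c = Cod C f \<and> zero_arr C (Cp C c f) \<and>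
     (\<forall>g\<in>Ar C. Dom C g = Cod C f \<longrightarrow> zero_arr C (Cp C g f) \<longrightarrow>
        (\<exists>!u. u \<in> hom C (Cod C c) (Cod C g) \<and> Cp C u c = g))"

definition has_product :: "('o,'m) cat \<Rightarrow> 'o \<Rightarrow> 'o \<Rightarrow> bool" where
  "has_product C A B \<longleftrightarrow> (\<exists>P\<in>Ob C. \<exists>p1\<in>hom C P A. \<exists>p2\<in>hom C P B.
     \<forall>X\<in>Ob C. \<forall>f\<in>hom C X A. \<forall>g\<in>hom C X B.
        \<exists>!u. u \<in> hom C X P \<and> Cp C p1 u = f \<and> Cp C p2 u = g)"

definition has_coproduct :: "('o,'m) cat \<Rightarrow> 'o \<Rightarrow> 'o \<Rightarrow> bool" where
  "has_coproduct C A B \<longleftrightarrow> (\<exists>S\<in>Ob C. \<exists>i1\<in>hom C A S. \<exists>i2\<in>hom C B S.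
     \<forall>X\<in>Ob C. \<forall>f\<in>hom C A X. \<forall>g\<in>hom C B X.
        \<exists>!u. u \<in> hom C S X \<and> Cp C u i1 = f \<and> Cp C u i2 = g)"

text \<open>Abelian category (Mac Lane, CWM VIII.3): zero object, binary products and
  coproducts, kernels and cokernels, every mono is a kernel, every epi is a cokernel.\<close>
definition abelian :: "('o,'m) cat \<Rightarrow> bool" where
  "abelian C \<longleftrightarrow> is_category C \<and> (\<exists>Z. zero_obj C Z) \<and>
     (\<forall>A\<in>Ob C. \<forall>B\<in>Ob C. has_product C A B \<and> has_coproduct C A B) \<and>
     (\<forall>f\<in>Ar C. (\<exists>k. is_kernel C f k) \<and> (\<exists>c. is_cokernel C f c)) \<and>
     (\<forall>m. mono C m \<longrightarrow> (\<exists>f. is_kernel C f m)) \<and>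
     (\<forall>e. epi C e \<longrightarrow> (\<exists>f. is_cokernel C f e))"

definition contra_functor ::
  "('a,'f) cat \<Rightarrow> ('b,'g) cat \<Rightarrow> ('a \<Rightarrow> 'b) \<Rightarrow> ('f \<Rightarrow> 'g) \<Rightarrow> bool" where
  "contra_functor C D Fo Fm \<longleftrightarrow>
     (\<forall>A\<in>Ob C. Fo A \<in> Ob D) \<and>
     (\<forall>f\<in>Ar C. Fm f \<in> hom D (Fo (Cod C f)) (Fo (Dom C f))) \<and>
     (\<forall>A\<in>Ob C. Fm (Id C A) = Id D (Fo A)) \<and>
     (\<forall>f\<in>Ar C. \<forall>g\<in>Ar C. Cod C f = Dom C g \<longrightarrow> Fm (Cp C g f) = Cp D (Fm f) (Fm g))"

definition left_adjoint_pair ::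
  "('a,'f) cat \<Rightarrow> ('b,'g) cat \<Rightarrow> ('a \<Rightarrow> 'b) \<Rightarrow> ('f \<Rightarrow> 'g) \<Rightarrow> ('b \<Rightarrow> 'a) \<Rightarrow> ('g \<Rightarrow> 'f)
   \<Rightarrow> ('a \<Rightarrow> 'b \<Rightarrow> 'g \<Rightarrow> 'f) \<Rightarrow> bool" where
  "left_adjoint_pair CA CB Lo Lm Ro Rm phi \<longleftrightarrow>
     (\<forall>A\<in>Ob CA. \<forall>B\<in>Ob CB. bij_betw (phi A B) (hom CB (Lo A) B) (hom CA (Ro B) A)) \<and>
     (\<forall>A\<in>Ob CA. \<forall>A'\<in>Ob CA. \<forall>B\<in>Ob CB. \<forall>B'\<in>Ob CB.
        \<forall>a\<in>hom CA A A'. \<forall>b\<in>hom CB B B'. \<forall>g\<in>hom CB (Lo A) B.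
          phi A' B' (Cp CB b (Cp CB g (Lm a))) = Cp CA a (Cp CA (phi A B g) (Rm b)))"

definition left_eps :: "('a,'f) cat \<Rightarrow> ('b,'g) cat \<Rightarrow> ('a \<Rightarrow> 'b) \<Rightarrow> ('b \<Rightarrow> 'a)
   \<Rightarrow> ('a \<Rightarrow> 'b \<Rightarrow> 'g \<Rightarrow> 'f) \<Rightarrow> 'b \<Rightarrow> 'g" where
  "left_eps CA CB Lo Ro phi B = inv_into (hom CB (Lo (Ro B)) B) (phi (Ro B) B) (Id CA (Ro B))"

definition left_eta :: "('b,'g) cat \<Rightarrow> ('a \<Rightarrow> 'b) \<Rightarrow> ('a \<Rightarrow> 'b \<Rightarrow> 'g \<Rightarrow> 'f) \<Rightarrow> 'a \<Rightarrow> 'f" where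
  "left_eta CB Lo phi A = phi A (Lo A) (Id CB (Lo A))"

definition right_adjoint_pair ::
  "('a,'f) cat \<Rightarrow> ('b,'g) cat \<Rightarrow> ('a \<Rightarrow> 'b) \<Rightarrow> ('f \<Rightarrow> 'g) \<Rightarrow> ('b \<Rightarrow> 'a) \<Rightarrow> ('g \<Rightarrow> 'f)
   \<Rightarrow> ('a \<Rightarrow> 'b \<Rightarrow> 'f \<Rightarrow> 'g) \<Rightarrow> bool" where
  "right_adjoint_pair CA CB Lo Lm Ro Rm psi \<longleftrightarrow>
     (\<forall>A\<in>Ob CA. \<forall>B\<in>Ob CB. bij_betw (psi A B) (hom CA A (Ro B)) (hom CB B (Lo A))) \<and>
     (\<forall>A\<in>Ob CA. \<forall>A'\<in>Ob CA. \<forall>B\<in>Ob CB. \<forall>B'\<in>Ob CB.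
        \<forall>a\<in>hom CA A' A. \<forall>b\<in>hom CB B' B. \<forall>g\<in>hom CA A (Ro B).
          psi A' B' (Cp CA (Rm b) (Cp CA g a)) = Cp CB (Lm a) (Cp CB (psi A B g) b))"

definition right_eps :: "('a,'f) cat \<Rightarrow> ('b \<Rightarrow> 'a) \<Rightarrow> ('a \<Rightarrow> 'b \<Rightarrow> 'f \<Rightarrow> 'g) \<Rightarrow> 'b \<Rightarrow> 'g" where
  "right_eps CA Ro psi B = psi (Ro B) B (Id CA (Ro B))"

definition right_eta :: "('a,'f) cat \<Rightarrow> ('b,'g) cat \<Rightarrow> ('a \<Rightarrow> 'b) \<Rightarrow> ('b \<Rightarrow> 'a)
   \<Rightarrow> ('a \<Rightarrow> 'b \<Rightarrow> 'f \<Rightarrow> 'g) \<Rightarrow> 'a \<Rightarrow> 'f" where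
  "right_eta CA CB Lo Ro psi A = inv_into (hom CA A (Ro (Lo A))) (psi A (Lo A)) (Id CB (Lo A))"

definition fully_invariant :: "('o,'m) cat \<Rightarrow> 'm \<Rightarrow> bool" where
  "fully_invariant C k \<longleftrightarrow> mono C k \<and>
     (\<forall>h\<in>hom C (Cod C k) (Cod C k). \<exists>\<alpha>\<in>hom C (Dom C k) (Dom C k). Cp C h k = Cp C k \<alpha>)"

definition fully_coinvariant :: "('o,'m) cat \<Rightarrow> 'm \<Rightarrow> bool" where
  "fully_coinvariant C c \<longleftrightarrow> epi C c \<and>
     (\<forall>h\<in>hom C (Dom C c) (Dom C c). \<exists>\<gamma>\<in>hom C (Cod C c) (Cod C c). Cp C c h = Cp C \<gamma> c)"

text \<open>strongly_rickart C M N : N is strongly M-Rickart.\<close>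
definition strongly_rickart :: "('o,'m) cat \<Rightarrow> 'o \<Rightarrow> 'o \<Rightarrow> bool" where
  "strongly_rickart C M N \<longleftrightarrow>
     (\<forall>f\<in>hom C M N. \<forall>k. is_kernel C f k \<longrightarrow> fully_invariant C k \<and> section C k)"

text \<open>dual_strongly_rickart C M N : N is dual strongly M-Rickart.\<close>
definition dual_strongly_rickart :: "('o,'m) cat \<Rightarrow> 'o \<Rightarrow> 'o \<Rightarrow> bool" where
  "dual_strongly_rickart C M N \<longleftrightarrow>
     (\<forall>f\<in>hom C M N. \<forall>c. is_cokernel C f c \<longrightarrow> fully_coinvariant C c \<and> retraction C c)"

text \<open>cyclic C X Y : Y is X-cyclic.  cocyclic C X Y : X is Y-cocyclic.\<close>
definition cyclic :: "('o,'m) cat \<Rightarrow> 'o \<Rightarrow> 'o \<Rightarrow> bool" where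
  "cyclic C X Y \<longleftrightarrow> (\<exists>e\<in>hom C X Y. epi C e)"

definition cocyclic :: "('o,'m) cat \<Rightarrow> 'o \<Rightarrow> 'o \<Rightarrow> bool" where
  "cocyclic C X Y \<longleftrightarrow> (\<exists>m\<in>hom C X Y. mono C m)"

end

theory Submission
  imports Defs
begin


lemma homI: "f \<in> Ar C \<Longrightarrow> Dom C f = A \<Longrightarrow> Cod C f = B \<Longrightarrow> f \<in> hom C A B"
  by (simp add: hom_def)

lemma homD: "f \<in> hom C A B \<Longrightarrow> f \<in> Ar C \<and> Dom C f = A \<and> Cod C f = B"
  by (simp add: hom_def)

lemma hom_Ob:
  assumes "is_category C" "f \<in> hom C A B" shows "A \<in> Ob C" "B \<in> Ob C"
  using assms unfolding is_category_def hom_def by auto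

lemma comp_hom:
  assumes "is_category C" "f \<in> hom C A B" "g \<in> hom C B D"
  shows "Cp C g f \<in> hom C A D"
  using assms unfolding is_category_def hom_def by auto

lemma id_hom:
  assumes "is_category C" "A \<in> Ob C" shows "Id C A \<in> hom C A A"
  using assms unfolding is_category_def by auto

lemma id_right:
  assumes "is_category C" "f \<in> hom C A B" shows "Cp C f (Id C A) = f"
  using assms unfolding is_category_def hom_def by auto

lemma id_left:
  assumes "is_category C" "f \<in> hom C A B" shows "Cp C (Id C B) f = f"
  using assms unfolding is_category_def hom_def by auto

lemma assoc:
  assumes "is_category C" "f \<in> hom C A B" "g \<in> hom C B D" "h \<in> hom C D E"
  shows "Cp C h (Cp C g f) = Cp C (Cp C h g) f"
  using assms unfolding is_category_def hom_def by auto

lemma Ar_hom: "f \<in> Ar C \<Longrightarrow> f \<in> hom C (Dom C f) (Cod C f)"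
  by (simp add: hom_def)

lemma zero_arr_compL:
  assumes C: "is_category C" and z: "zero_arr C f" and g: "g \<in> hom C (Cod C f) X"
  shows "zero_arr C (Cp C g f)"
proof -
  from z obtain Z a b where Z: "zero_obj C Z" and a: "a \<in> hom C (Dom C f) Z"
    and b: "b \<in> hom C Z (Cod C f)" and f: "f = Cp C b a" unfolding zero_arr_def by blast
  have fa: "f \<in> hom C (Dom C f) (Cod C f)" using z by (simp add: zero_arr_def hom_def)
  have "Cp C g f = Cp C (Cp C g b) a" using assoc[OF C a b g] f by simp
  moreover have "Cp C g b \<in> hom C Z X" using comp_hom[OF C b g] .
  moreover have "Cp C g f \<in> Ar C" "Dom C (Cp C g f) = Dom C f" "Cod C (Cp C g f) = X"
    using comp_hom[OF C fa g] by (auto simp: hom_def)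
  ultimately show ?thesis unfolding zero_arr_def using Z a by metis
qed

lemma zero_arr_compR:
  assumes C: "is_category C" and z: "zero_arr C f" and g: "g \<in> hom C X (Dom C f)"
  shows "zero_arr C (Cp C f g)"
proof -
  from z obtain Z a b where Z: "zero_obj C Z" and a: "a \<in> hom C (Dom C f) Z"
    and b: "b \<in> hom C Z (Cod C f)" and f: "f = Cp C b a" unfolding zero_arr_def by blast
  have fa: "f \<in> hom C (Dom C f) (Cod C f)" using z by (simp add: zero_arr_def hom_def)
  have "Cp C f g = Cp C b (Cp C a g)" using assoc[OF C g a b] f by simp
  moreover have "Cp C a g \<in> hom C X Z" using comp_hom[OF C g a] .
  moreover have "Cp C f g \<in> Ar C" "Dom C (Cp C f g) = X" "Cod C (Cp C f g) = Cod C f"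
    using comp_hom[OF C g fa] by (auto simp: hom_def)
  ultimately show ?thesis unfolding zero_arr_def using Z b by metis
qed

lemma zero_arr_through:
  assumes C: "is_category C" and Z: "zero_obj C Z" and a: "a \<in> hom C X Z" and b: "b \<in> hom C Z Y"
  shows "zero_arr C (Cp C b a)"
  using comp_hom[OF C a b] Z a b unfolding zero_arr_def hom_def by auto

lemma initial_zero:
  assumes C: "is_category C" and Z: "zero_obj C Z" and I: "I \<in> Ob C"
    and ini: "\<forall>A\<in>Ob C. \<exists>!f. f \<in> hom C I A"
  shows "zero_obj C I"
proof -
  have ZO: "Z \<in> Ob C" using Z by (simp add: zero_obj_def)
  obtain j where j: "j \<in> hom C I Z" using Z I unfolding zero_obj_def by blast
  obtain i where i: "i \<in> hom C Z I" using Z I unfolding zero_obj_def by blast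
  have ij: "Cp C i j = Id C I"
    using ini I comp_hom[OF C j i] id_hom[OF C I] by blast
  have "\<forall>A\<in>Ob C. \<exists>!f. f \<in> hom C A I"
  proof
    fix A assume A: "A \<in> Ob C"
    obtain x where x: "x \<in> hom C A Z" using Z A unfolding zero_obj_def by blast
    have "Cp C i x \<in> hom C A I" using comp_hom[OF C x i] .
    moreover have "y = Cp C i x" if y: "y \<in> hom C A I" for y
    proof -
      have "Cp C j y = x" using Z A comp_hom[OF C y j] x unfolding zero_obj_def by blast
      hence "Cp C i (Cp C j y) = Cp C i x" by simp
      thus ?thesis using assoc[OF C y j i] ij id_left[OF C y] by simp
    qed
    ultimately show "\<exists>!f. f \<in> hom C A I" by blast
  qed
  thus ?thesis using ini I unfolding zero_obj_def by blast
qed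

lemma kernel_univ:
  assumes "is_kernel C f k" "g \<in> Ar C" "Cod C g = Dom C f" "zero_arr C (Cp C f g)"
  shows "\<exists>!u. u \<in> hom C (Dom C g) (Dom C k) \<and> Cp C k u = g"
  using assms unfolding is_kernel_def by blast

lemma cokernel_univ:
  assumes "is_cokernel C f c" "g \<in> Ar C" "Dom C g = Cod C f" "zero_arr C (Cp C g f)"
  shows "\<exists>!u. u \<in> hom C (Cod C c) (Cod C g) \<and> Cp C u c = g"
  using assms unfolding is_cokernel_def by blast

lemma kernel_mono:
  assumes C: "is_category C" and k: "is_kernel C f k" shows "mono C k"
  unfolding mono_def
proof (intro conjI ballI impI)
  show "k \<in> Ar C" using k by (simp add: is_kernel_def)
next
  fix g h assume g: "g \<in> Ar C" and h: "h \<in> Ar C" and gc: "Cod C g = Dom C k"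
    and hc: "Cod C h = Dom C k" and dd: "Dom C g = Dom C h" and eq: "Cp C k g = Cp C k h"
  have kh: "k \<in> hom C (Dom C k) (Cod C k)" using k by (simp add: is_kernel_def hom_def)
  have fh: "f \<in> hom C (Dom C f) (Cod C f)" using k by (simp add: is_kernel_def hom_def)
  have kf: "Cod C k = Dom C f" using k by (simp add: is_kernel_def)
  have fk: "zero_arr C (Cp C f k)" using k by (simp add: is_kernel_def)
  have gH: "g \<in> hom C (Dom C g) (Dom C k)" using g gc by (simp add: hom_def)
  have kgH: "Cp C k g \<in> hom C (Dom C g) (Dom C f)" using comp_hom[OF C gH kh] kf by simp
  have fkH: "Cp C f k \<in> hom C (Dom C k) (Cod C f)" using comp_hom[OF C kh] fh kf by simp
  have z1: "zero_arr C (Cp C (Cp C f k) g)"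
    using zero_arr_compR[OF C fk] gH fkH by (simp add: hom_def)
  have z: "zero_arr C (Cp C f (Cp C k g))"
    using z1 assoc[OF C gH kh] fh kf by simp
  have U: "\<exists>!u. u \<in> hom C (Dom C g) (Dom C k) \<and> Cp C k u = Cp C k g"
    using kernel_univ[OF k _ _ z] kgH by (simp add: hom_def)
  show "g = h" using U gH hc h dd eq by (auto simp: hom_def)
qed

lemma cokernel_epi:
  assumes C: "is_category C" and c: "is_cokernel C f c" shows "epi C c"
  unfolding epi_def
proof (intro conjI ballI impI)
  show "c \<in> Ar C" using c by (simp add: is_cokernel_def)
next
  fix g h assume g: "g \<in> Ar C" and h: "h \<in> Ar C" and gc: "Dom C g = Cod C c"
    and hc: "Dom C h = Cod C c" and dd: "Cod C g = Cod C h" and eq: "Cp C g c = Cp C h c"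
  have ch: "c \<in> hom C (Dom C c) (Cod C c)" using c by (simp add: is_cokernel_def hom_def)
  have fh: "f \<in> hom C (Dom C f) (Cod C f)" using c by (simp add: is_cokernel_def hom_def)
  have cf: "Dom C c = Cod C f" using c by (simp add: is_cokernel_def)
  have cz: "zero_arr C (Cp C c f)" using c by (simp add: is_cokernel_def)
  have gH: "g \<in> hom C (Cod C c) (Cod C g)" using g gc by (simp add: hom_def)
  have gcH: "Cp C g c \<in> hom C (Cod C f) (Cod C g)" using comp_hom[OF C ch gH] cf by simp
  have cfH: "Cp C c f \<in> hom C (Dom C f) (Cod C c)" using comp_hom[OF C fh] ch cf by simp
  have z1: "zero_arr C (Cp C g (Cp C c f))"
    using zero_arr_compL[OF C cz] gH cfH by (simp add: hom_def)
  have z: "zero_arr C (Cp C (Cp C g c) f)"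
    using z1 assoc[OF C fh _ gH] ch cf by simp
  have U: "\<exists>!u. u \<in> hom C (Cod C c) (Cod C g) \<and> Cp C u c = Cp C g c"
    using cokernel_univ[OF c _ _ z] gcH by (simp add: hom_def)
  show "g = h" using U gH hc h dd eq by (auto simp: hom_def)
qed



lemma iso_inv:
  assumes "iso C f" shows "\<exists>g\<in>hom C (Cod C f) (Dom C f). Cp C g f = Id C (Dom C f) \<and> Cp C f g = Id C (Cod C f)"
  using assms by (simp add: iso_def)

lemma isoI:
  assumes "f \<in> hom C A B" "g \<in> hom C B A" "Cp C g f = Id C A" "Cp C f g = Id C B"
  shows "iso C f"
  using assms unfolding iso_def hom_def by auto

lemma cokernel_unique:
  assumes C: "is_category C" and c: "is_cokernel C g c" and c': "is_cokernel C g c'"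
  shows "\<exists>\<theta> \<theta>'. \<theta> \<in> hom C (Cod C c') (Cod C c) \<and> \<theta>' \<in> hom C (Cod C c) (Cod C c') \<and>
     Cp C \<theta> c' = c \<and> Cp C \<theta>' c = c' \<and> Cp C \<theta> \<theta>' = Id C (Cod C c) \<and> Cp C \<theta>' \<theta> = Id C (Cod C c')"
proof -
  have cA: "c \<in> Ar C" "Dom C c = Cod C g" "zero_arr C (Cp C c g)" using c by (auto simp: is_cokernel_def)
  have cA': "c' \<in> Ar C" "Dom C c' = Cod C g" "zero_arr C (Cp C c' g)" using c' by (auto simp: is_cokernel_def)
  obtain t where t: "t \<in> hom C (Cod C c') (Cod C c)" "Cp C t c' = c"
    using cokernel_univ[OF c' cA] by blast
  obtain t' where t': "t' \<in> hom C (Cod C c) (Cod C c')" "Cp C t' c = c'"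
    using cokernel_univ[OF c cA'] by blast
  have ch: "c \<in> hom C (Cod C g) (Cod C c)" using cA by (simp add: hom_def)
  have ch': "c' \<in> hom C (Cod C g) (Cod C c')" using cA' by (simp add: hom_def)
  have O: "Cod C c \<in> Ob C" "Cod C c' \<in> Ob C" using hom_Ob[OF C ch] hom_Ob[OF C ch'] by auto
  have U: "\<exists>!u. u \<in> hom C (Cod C c) (Cod C c) \<and> Cp C u c = c"
    using cokernel_univ[OF c cA] by simp
  have U': "\<exists>!u. u \<in> hom C (Cod C c') (Cod C c') \<and> Cp C u c' = c'"
    using cokernel_univ[OF c' cA'] by simp
  have 1: "Cp C t t' = Id C (Cod C c)"
  proof -
    have "Cp C (Cp C t t') c = c" using assoc[OF C ch t'(1) t(1)] t t' by simp
    moreover have "Cp C (Id C (Cod C c)) c = c" using id_left[OF C ch] .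
    ultimately show ?thesis using U comp_hom[OF C t'(1) t(1)] id_hom[OF C O(1)] by blast
  qed
  have 2: "Cp C t' t = Id C (Cod C c')"
  proof -
    have "Cp C (Cp C t' t) c' = c'" using assoc[OF C ch' t(1) t'(1)] t t' by simp
    moreover have "Cp C (Id C (Cod C c')) c' = c'" using id_left[OF C ch'] .
    ultimately show ?thesis using U' comp_hom[OF C t(1) t'(1)] id_hom[OF C O(2)] by blast
  qed
  show ?thesis using t t' 1 2 by blast
qed

lemma cf_hom:
  assumes "contra_functor C D Fo Fm" "f \<in> hom C A B" shows "Fm f \<in> hom D (Fo B) (Fo A)"
  using assms unfolding contra_functor_def hom_def by auto

lemma cf_Ob:
  assumes "contra_functor C D Fo Fm" "A \<in> Ob C" shows "Fo A \<in> Ob D"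
  using assms unfolding contra_functor_def by auto

lemma cf_id:
  assumes "contra_functor C D Fo Fm" "A \<in> Ob C" shows "Fm (Id C A) = Id D (Fo A)"
  using assms unfolding contra_functor_def by auto

lemma cf_comp:
  assumes "contra_functor C D Fo Fm" "f \<in> hom C A B" "g \<in> hom C B E"
  shows "Fm (Cp C g f) = Cp D (Fm f) (Fm g)"
  using assms unfolding contra_functor_def hom_def by auto

locale ladj =
  fixes CA :: "('a,'f) cat" and CB :: "('b,'g) cat"
    and Lo :: "'a \<Rightarrow> 'b" and Lm :: "'f \<Rightarrow> 'g"
    and Ro :: "'b \<Rightarrow> 'a" and Rm :: "'g \<Rightarrow> 'f"
    and phi :: "'a \<Rightarrow> 'b \<Rightarrow> 'g \<Rightarrow> 'f"
  assumes catA: "is_category CA" and catB: "is_category CB"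
    and zA: "\<exists>Z. zero_obj CA Z" and zB: "\<exists>Z. zero_obj CB Z"
    and kerB: "\<forall>f\<in>Ar CB. \<exists>k. is_kernel CB f k"
    and L: "contra_functor CA CB Lo Lm" and R: "contra_functor CB CA Ro Rm"
    and adj: "left_adjoint_pair CA CB Lo Lm Ro Rm phi"
begin

abbreviation "eps \<equiv> left_eps CA CB Lo Ro phi"
abbreviation "eta \<equiv> left_eta CB Lo phi"

lemma phi_bij: "A \<in> Ob CA \<Longrightarrow> B \<in> Ob CB \<Longrightarrow> bij_betw (phi A B) (hom CB (Lo A) B) (hom CA (Ro B) A)"
  using adj unfolding left_adjoint_pair_def by blast

lemma phi_nat:
  assumes "A \<in> Ob CA" "A' \<in> Ob CA" "B \<in> Ob CB" "B' \<in> Ob CB"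
    "a \<in> hom CA A A'" "b \<in> hom CB B B'" "g \<in> hom CB (Lo A) B"
  shows "phi A' B' (Cp CB b (Cp CB g (Lm a))) = Cp CA a (Cp CA (phi A B g) (Rm b))"
  using adj assms unfolding left_adjoint_pair_def by blast

lemma phi_hom: "A \<in> Ob CA \<Longrightarrow> B \<in> Ob CB \<Longrightarrow> g \<in> hom CB (Lo A) B \<Longrightarrow> phi A B g \<in> hom CA (Ro B) A"
  by (rule bij_betw_apply[OF phi_bij])

lemma phi_inj: "A \<in> Ob CA \<Longrightarrow> B \<in> Ob CB \<Longrightarrow> g \<in> hom CB (Lo A) B \<Longrightarrow> g' \<in> hom CB (Lo A) B
   \<Longrightarrow> phi A B g = phi A B g' \<Longrightarrow> g = g'"
  using phi_bij[unfolded bij_betw_def inj_on_def] by blast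

lemma phi_surj: "A \<in> Ob CA \<Longrightarrow> B \<in> Ob CB \<Longrightarrow> a \<in> hom CA (Ro B) A \<Longrightarrow> \<exists>g\<in>hom CB (Lo A) B. phi A B g = a"
proof -
  assume A: "A \<in> Ob CA" and B: "B \<in> Ob CB" and a: "a \<in> hom CA (Ro B) A"
  have "a \<in> phi A B ` hom CB (Lo A) B" using phi_bij[OF A B] a by (simp add: bij_betw_def)
  thus ?thesis by blast
qed

lemma eps_prop:
  assumes B: "B \<in> Ob CB"
  shows "eps B \<in> hom CB (Lo (Ro B)) B" "phi (Ro B) B (eps B) = Id CA (Ro B)"
proof -
  have RB: "Ro B \<in> Ob CA" using cf_Ob[OF R B] .
  have bj: "bij_betw (phi (Ro B) B) (hom CB (Lo (Ro B)) B) (hom CA (Ro B) (Ro B))" using phi_bij[OF RB B] .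
  have i: "Id CA (Ro B) \<in> hom CA (Ro B) (Ro B)" using id_hom[OF catA RB] .
  show "eps B \<in> hom CB (Lo (Ro B)) B" unfolding left_eps_def
    using bj i by (metis bij_betw_def inv_into_into)
  show "phi (Ro B) B (eps B) = Id CA (Ro B)" unfolding left_eps_def
    using bj i by (simp add: bij_betw_inv_into_right)
qed

lemma eta_hom: "A \<in> Ob CA \<Longrightarrow> eta A \<in> hom CA (Ro (Lo A)) A"
  unfolding left_eta_def using phi_hom cf_Ob[OF L] id_hom[OF catB] by blast

lemma phi_eq:
  assumes A: "A \<in> Ob CA" and B: "B \<in> Ob CB" and g: "g \<in> hom CB (Lo A) B"
  shows "phi A B g = Cp CA (eta A) (Rm g)"
proof -
  have LA: "Lo A \<in> Ob CB" using cf_Ob[OF L A] .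
  have i: "Id CB (Lo A) \<in> hom CB (Lo A) (Lo A)" using id_hom[OF catB LA] .
  have "phi A B (Cp CB g (Cp CB (Id CB (Lo A)) (Lm (Id CA A)))) = Cp CA (Id CA A) (Cp CA (phi A (Lo A) (Id CB (Lo A))) (Rm g))"
    using phi_nat[OF A A LA B id_hom[OF catA A] g i] .
  moreover have "Cp CB g (Cp CB (Id CB (Lo A)) (Lm (Id CA A))) = g"
    using cf_id[OF L A] id_left[OF catB i] id_right[OF catB g] by simp
  moreover have "Cp CA (Id CA A) (Cp CA (phi A (Lo A) (Id CB (Lo A))) (Rm g)) = Cp CA (eta A) (Rm g)"
    using id_left[OF catA comp_hom[OF catA cf_hom[OF R g] eta_hom[OF A]]] unfolding left_eta_def by simp
  ultimately show ?thesis by simp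
qed

lemma triangle:
  assumes B: "B \<in> Ob CB" shows "Cp CA (eta (Ro B)) (Rm (eps B)) = Id CA (Ro B)"
  using phi_eq[OF cf_Ob[OF R B] B eps_prop(1)[OF B]] eps_prop(2)[OF B] by simp

lemma eps_nat:
  assumes B: "B \<in> Ob CB" and B': "B' \<in> Ob CB" and b: "b \<in> hom CB B B'"
  shows "Cp CB (eps B') (Lm (Rm b)) = Cp CB b (eps B)"
proof -
  have RB: "Ro B \<in> Ob CA" and RB': "Ro B' \<in> Ob CA" using cf_Ob[OF R] B B' by auto
  have Rb: "Rm b \<in> hom CA (Ro B') (Ro B)" using cf_hom[OF R b] .
  have e: "eps B \<in> hom CB (Lo (Ro B)) B" and e': "eps B' \<in> hom CB (Lo (Ro B')) B'" using eps_prop B B' by auto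
  have LRb: "Lm (Rm b) \<in> hom CB (Lo (Ro B)) (Lo (Ro B'))" using cf_hom[OF L Rb] .
  have h1: "Cp CB (eps B') (Lm (Rm b)) \<in> hom CB (Lo (Ro B)) B'" using comp_hom[OF catB LRb e'] .
  have h2: "Cp CB b (eps B) \<in> hom CB (Lo (Ro B)) B'" using comp_hom[OF catB e b] .
  have "phi (Ro B) B' (Cp CB (Id CB B') (Cp CB (eps B') (Lm (Rm b)))) = Cp CA (Rm b) (Cp CA (phi (Ro B') B' (eps B')) (Rm (Id CB B')))"
    using phi_nat[OF RB' RB B' B' Rb id_hom[OF catB B'] e'] .
  hence p1: "phi (Ro B) B' (Cp CB (eps B') (Lm (Rm b))) = Rm b"
    using id_left[OF catB h1] eps_prop(2)[OF B'] cf_id[OF R B'] id_left[OF catA id_hom[OF catA RB']]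
      id_right[OF catA Rb] by (simp only:)
  have "phi (Ro B) B' (Cp CB b (Cp CB (eps B) (Lm (Id CA (Ro B))))) = Cp CA (Id CA (Ro B)) (Cp CA (phi (Ro B) B (eps B)) (Rm b))"
    using phi_nat[OF RB RB B B' id_hom[OF catA RB] b e] .
  hence p2: "phi (Ro B) B' (Cp CB b (eps B)) = Rm b"
    using cf_id[OF L RB] id_right[OF catB e] eps_prop(2)[OF B] id_left[OF catA Rb] by (simp only:)
  show ?thesis using p1 p2 by (intro phi_inj[OF RB B' h1 h2]) (simp only:)
qed


lemma bij_unique: "bij_betw f X Y \<Longrightarrow> \<exists>!y. y \<in> Y \<Longrightarrow> \<exists>!x. x \<in> X"
  unfolding bij_betw_def inj_on_def by blast

lemma R_zero_obj:
  assumes Z: "zero_obj CB Z" shows "zero_obj CA (Ro Z)"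
proof -
  have ZO: "Z \<in> Ob CB" using Z by (simp add: zero_obj_def)
  obtain Z' where Z': "zero_obj CA Z'" using zA by blast
  show ?thesis
  proof (rule initial_zero[OF catA Z' cf_Ob[OF R ZO]], intro ballI)
    fix A assume A: "A \<in> Ob CA"
    have "\<exists>!y. y \<in> hom CB (Lo A) Z" using Z cf_Ob[OF L A] by (simp add: zero_obj_def)
    thus "\<exists>!f. f \<in> hom CA (Ro Z) A" using bij_unique[OF bij_betw_inv_into[OF phi_bij[OF A ZO]]] by blast
  qed
qed

lemma L_zero_obj:
  assumes Z: "zero_obj CA Z" shows "zero_obj CB (Lo Z)"
proof -
  have ZO: "Z \<in> Ob CA" using Z by (simp add: zero_obj_def)
  obtain Z' where Z': "zero_obj CB Z'" using zB by blast
  show ?thesis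
  proof (rule initial_zero[OF catB Z' cf_Ob[OF L ZO]], intro ballI)
    fix B assume B: "B \<in> Ob CB"
    have "\<exists>!y. y \<in> hom CA (Ro B) Z" using Z cf_Ob[OF R B] by (simp add: zero_obj_def)
    thus "\<exists>!f. f \<in> hom CB (Lo Z) B" using bij_unique[OF phi_bij[OF ZO B]] by blast
  qed
qed

lemma R_zero_arr:
  assumes z: "zero_arr CB f" shows "zero_arr CA (Rm f)"
proof -
  from z obtain Z a b where Z: "zero_obj CB Z" and a: "a \<in> hom CB (Dom CB f) Z"
    and b: "b \<in> hom CB Z (Cod CB f)" and f: "f = Cp CB b a" unfolding zero_arr_def by blast
  have "Rm f = Cp CA (Rm a) (Rm b)" using cf_comp[OF R a b] f by simp
  thus ?thesis using zero_arr_through[OF catA R_zero_obj[OF Z] cf_hom[OF R b] cf_hom[OF R a]] by simp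
qed

lemma phi_zero:
  assumes A: "A \<in> Ob CA" and B: "B \<in> Ob CB" and h: "h \<in> hom CB (Lo A) B"
    and z: "zero_arr CA (phi A B h)"
  shows "zero_arr CB h"
proof -
  have ph: "phi A B h \<in> hom CA (Ro B) A" using phi_hom[OF A B h] .
  from z obtain Z a b where Z: "zero_obj CA Z" and a: "a \<in> hom CA (Ro B) Z"
    and b: "b \<in> hom CA Z A" and f: "phi A B h = Cp CA b a"
    unfolding zero_arr_def using ph by (auto simp: hom_def)
  have ZO: "Z \<in> Ob CA" using Z by (simp add: zero_obj_def)
  obtain g0 where g0: "g0 \<in> hom CB (Lo Z) B" "phi Z B g0 = a" using phi_surj[OF ZO B a] by blast
  have Lb: "Lm b \<in> hom CB (Lo A) (Lo Z)" using cf_hom[OF L b] .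
  have gL: "Cp CB g0 (Lm b) \<in> hom CB (Lo A) B" using comp_hom[OF catB Lb g0(1)] .
  have "phi A B (Cp CB (Id CB B) (Cp CB g0 (Lm b))) = Cp CA b (Cp CA (phi Z B g0) (Rm (Id CB B)))"
    using phi_nat[OF ZO A B B b id_hom[OF catB B] g0(1)] .
  hence "phi A B (Cp CB g0 (Lm b)) = Cp CA b a"
    using id_left[OF catB gL] cf_id[OF R B] g0(2) id_right[OF catA a] by (simp only:)
  hence "h = Cp CB g0 (Lm b)" using phi_inj[OF A B h gL] f by simp
  thus ?thesis using zero_arr_through[OF catB L_zero_obj[OF Z] Lb g0(1)] by simp
qed

lemma R_coker:
  assumes k: "is_kernel CB f k" shows "is_cokernel CA (Rm f) (Rm k)"
proof -
  have fA: "f \<in> Ar CB" and kA: "k \<in> Ar CB" and kf: "Cod CB k = Dom CB f" and z: "zero_arr CB (Cp CB f k)"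
    using k by (auto simp: is_kernel_def)
  define M where "M = Dom CB f"
  define N where "N = Cod CB f"
  define K where "K = Dom CB k"
  have fh: "f \<in> hom CB M N" using fA by (simp add: hom_def M_def N_def)
  have kh: "k \<in> hom CB K M" using kA kf by (simp add: hom_def K_def M_def)
  have MO: "M \<in> Ob CB" and NO: "N \<in> Ob CB" and KO: "K \<in> Ob CB"
    using hom_Ob[OF catB fh] hom_Ob[OF catB kh] by auto
  have Rf: "Rm f \<in> hom CA (Ro N) (Ro M)" using cf_hom[OF R fh] .
  have Rk: "Rm k \<in> hom CA (Ro M) (Ro K)" using cf_hom[OF R kh] .
  have mk: "mono CB k" using kernel_mono[OF catB k] .
  show ?thesis unfolding is_cokernel_def
  proof (intro conjI ballI impI)
    show "Rm f \<in> Ar CA" "Rm k \<in> Ar CA" "Dom CA (Rm k) = Cod CA (Rm f)" using Rf Rk by (auto simp: hom_def)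
    show "zero_arr CA (Cp CA (Rm k) (Rm f))" using R_zero_arr[OF z] cf_comp[OF R kh fh] by simp
  next
    fix g assume gA: "g \<in> Ar CA" and gd: "Dom CA g = Cod CA (Rm f)" and gz: "zero_arr CA (Cp CA g (Rm f))"
    define X where "X = Cod CA g"
    have gh: "g \<in> hom CA (Ro M) X" using gA gd Rf by (simp add: hom_def X_def)
    have XO: "X \<in> Ob CA" using hom_Ob[OF catA gh] by simp
    obtain g' where g': "g' \<in> hom CB (Lo X) M" "phi X M g' = g" using phi_surj[OF XO MO gh] by blast
    have fg: "Cp CB f g' \<in> hom CB (Lo X) N" using comp_hom[OF catB g'(1) fh] .
    have LX: "Lo X \<in> Ob CB" using cf_Ob[OF L XO] .
    have nat1: "\<And>b B B' g0. B \<in> Ob CB \<Longrightarrow> B' \<in> Ob CB \<Longrightarrow> b \<in> hom CB B B' \<Longrightarrow> g0 \<in> hom CB (Lo X) B \<Longrightarrow>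
        phi X B' (Cp CB b g0) = Cp CA (phi X B g0) (Rm b)"
    proof -
      fix b B B' g0 assume B: "B \<in> Ob CB" and B': "B' \<in> Ob CB" and b: "b \<in> hom CB B B'" and g0: "g0 \<in> hom CB (Lo X) B"
      have "phi X B' (Cp CB b (Cp CB g0 (Lm (Id CA X)))) = Cp CA (Id CA X) (Cp CA (phi X B g0) (Rm b))"
        using phi_nat[OF XO XO B B' id_hom[OF catA XO] b g0] .
      moreover have "Cp CB g0 (Lm (Id CA X)) = g0" using cf_id[OF L XO] id_right[OF catB g0] by simp
      moreover have "Cp CA (Id CA X) (Cp CA (phi X B g0) (Rm b)) = Cp CA (phi X B g0) (Rm b)"
        using id_left[OF catA comp_hom[OF catA cf_hom[OF R b] phi_hom[OF XO B g0]]] .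
      ultimately show "phi X B' (Cp CB b g0) = Cp CA (phi X B g0) (Rm b)" by simp
    qed
    have "phi X N (Cp CB f g') = Cp CA g (Rm f)" using nat1[OF MO NO fh g'(1)] g'(2) by simp
    hence fgz: "zero_arr CB (Cp CB f g')" using phi_zero[OF XO NO fg] gz by simp
    have "\<exists>!u. u \<in> hom CB (Dom CB g') (Dom CB k) \<and> Cp CB k u = g'"
    proof (rule kernel_univ[OF k _ _ fgz])
      show "g' \<in> Ar CB" "Cod CB g' = Dom CB f" using g'(1) by (auto simp: hom_def M_def)
    qed
    then obtain v where v: "v \<in> hom CB (Dom CB g') (Dom CB k)" "Cp CB k v = g'" by blast
    have vh: "v \<in> hom CB (Lo X) K" using v g'(1) by (simp add: hom_def K_def)
    have eq1: "Cp CA (phi X K v) (Rm k) = g" using nat1[OF KO MO kh vh] v(2) g'(2) by simp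
    show "\<exists>!u. u \<in> hom CA (Cod CA (Rm k)) (Cod CA g) \<and> Cp CA u (Rm k) = g"
    proof (rule ex1I[of _ "phi X K v"])
      show "phi X K v \<in> hom CA (Cod CA (Rm k)) (Cod CA g) \<and> Cp CA (phi X K v) (Rm k) = g"
        using phi_hom[OF XO KO vh] eq1 Rk by (simp add: hom_def X_def)
    next
      fix u assume u: "u \<in> hom CA (Cod CA (Rm k)) (Cod CA g) \<and> Cp CA u (Rm k) = g"
      have uh: "u \<in> hom CA (Ro K) X" using u Rk by (simp add: hom_def X_def)
      obtain w where w: "w \<in> hom CB (Lo X) K" "phi X K w = u" using phi_surj[OF XO KO uh] by blast
      have kw: "Cp CB k w \<in> hom CB (Lo X) M" using comp_hom[OF catB w(1) kh] .
      have kv: "Cp CB k v \<in> hom CB (Lo X) M" using comp_hom[OF catB vh kh] .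
      have "phi X M (Cp CB k w) = phi X M (Cp CB k v)"
        using nat1[OF KO MO kh w(1)] nat1[OF KO MO kh vh] w(2) u eq1 by simp
      hence "Cp CB k w = Cp CB k v" using phi_inj[OF XO MO kw kv] by simp
      hence "w = v" using mk w(1) vh kh unfolding mono_def hom_def by auto
      thus "u = phi X K v" using w(2) by simp
    qed
  qed
qed

lemma eps_iso_inv:
  assumes M: "M \<in> Ob CB" and i: "iso CB (eps M)"
  obtains e where "e \<in> hom CB M (Lo (Ro M))" "Cp CB e (eps M) = Id CB (Lo (Ro M))" "Cp CB (eps M) e = Id CB M"
  using iso_inv[OF i] eps_prop(1)[OF M] by (auto simp: hom_def)

lemma full:
  assumes M: "M \<in> Ob CB" and N: "N \<in> Ob CB" and i: "iso CB (eps M)" and g: "g \<in> hom CA (Ro N) (Ro M)"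
  shows "\<exists>f\<in>hom CB M N. Rm f = g"
proof -
  obtain e where e: "e \<in> hom CB M (Lo (Ro M))" "Cp CB e (eps M) = Id CB (Lo (Ro M))" "Cp CB (eps M) e = Id CB M"
    using eps_iso_inv[OF M i] by blast
  have RM: "Ro M \<in> Ob CA" using cf_Ob[OF R M] .
  obtain g' where g': "g' \<in> hom CB (Lo (Ro M)) N" "phi (Ro M) N g' = g" using phi_surj[OF RM N g] by blast
  define f where "f = Cp CB g' e"
  have fh: "f \<in> hom CB M N" using comp_hom[OF catB e(1) g'(1)] f_def by simp
  have em: "eps M \<in> hom CB (Lo (Ro M)) M" using eps_prop(1)[OF M] .
  have Re: "Rm e \<in> hom CA (Ro (Lo (Ro M))) (Ro M)" using cf_hom[OF R e(1)] .
  have Reps: "Rm (eps M) \<in> hom CA (Ro M) (Ro (Lo (Ro M)))" using cf_hom[OF R em] .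
  have eh: "eta (Ro M) \<in> hom CA (Ro (Lo (Ro M))) (Ro M)" using eta_hom[OF RM] .
  have r1: "Cp CA (Rm e) (Rm (eps M)) = Id CA (Ro M)"
    using cf_comp[OF R e(1) em] e(3) cf_id[OF R M] by simp
  have r2: "Cp CA (Rm (eps M)) (Rm e) = Id CA (Ro (Lo (Ro M)))"
    using cf_comp[OF R em e(1)] e(2) cf_id[OF R cf_Ob[OF L RM]] by simp
  have "Rm e = eta (Ro M)"
  proof -
    have "Rm e = Cp CA (Id CA (Ro M)) (Rm e)" using id_left[OF catA Re] by simp
    also have "\<dots> = Cp CA (Cp CA (eta (Ro M)) (Rm (eps M))) (Rm e)" using triangle[OF M] by simp
    also have "\<dots> = Cp CA (eta (Ro M)) (Cp CA (Rm (eps M)) (Rm e))" using assoc[OF catA Re Reps eh] by simp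
    also have "\<dots> = eta (Ro M)" using r2 id_right[OF catA eh] by simp
    finally show ?thesis .
  qed
  hence "Rm f = Cp CA (eta (Ro M)) (Rm g')" using cf_comp[OF R e(1) g'(1)] f_def by simp
  also have "\<dots> = g" using phi_eq[OF RM N g'(1)] g'(2) by simp
  finally show ?thesis using fh by blast
qed

lemma faithful_zero:
  assumes M: "M \<in> Ob CB" and N: "N \<in> Ob CB" and i: "iso CB (eps M)" and g: "g \<in> hom CB M N"
    and z: "zero_arr CA (Rm g)"
  shows "zero_arr CB g"
proof -
  obtain e where e: "e \<in> hom CB M (Lo (Ro M))" "Cp CB e (eps M) = Id CB (Lo (Ro M))" "Cp CB (eps M) e = Id CB M"
    using eps_iso_inv[OF M i] by blast
  have RM: "Ro M \<in> Ob CA" using cf_Ob[OF R M] .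
  have em: "eps M \<in> hom CB (Lo (Ro M)) M" using eps_prop(1)[OF M] .
  have ge: "Cp CB g (eps M) \<in> hom CB (Lo (Ro M)) N" using comp_hom[OF catB em g] .
  have Rg: "Rm g \<in> hom CA (Ro N) (Ro M)" using cf_hom[OF R g] .
  have "phi (Ro M) N (Cp CB g (eps M)) = Cp CA (eta (Ro M)) (Rm (Cp CB g (eps M)))"
    using phi_eq[OF RM N ge] .
  also have "\<dots> = Cp CA (eta (Ro M)) (Cp CA (Rm (eps M)) (Rm g))" using cf_comp[OF R em g] by simp
  also have "\<dots> = Cp CA (Cp CA (eta (Ro M)) (Rm (eps M))) (Rm g)"
    using assoc[OF catA Rg cf_hom[OF R em] eta_hom[OF RM]] by simp
  also have "\<dots> = Rm g" using triangle[OF M] id_left[OF catA Rg] by simp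
  finally have "zero_arr CB (Cp CB g (eps M))" using phi_zero[OF RM N ge] z by simp
  hence "zero_arr CB (Cp CB (Cp CB g (eps M)) e)" using zero_arr_compR[OF catB] e(1) ge by (simp add: hom_def)
  moreover have "Cp CB (Cp CB g (eps M)) e = g" using assoc[OF catB e(1) em g] e(3) id_right[OF catB g] by simp
  ultimately show ?thesis by simp
qed

end


lemma retraction_epi:
  assumes C: "is_category C" and u: "u \<in> hom C M K" and k: "k \<in> hom C K M" and uk: "Cp C u k = Id C K"
  shows "epi C u"
  unfolding epi_def
proof (intro conjI ballI impI)
  show "u \<in> Ar C" using u by (simp add: hom_def)
next
  fix g h assume g: "g \<in> Ar C" "Dom C g = Cod C u" and h: "h \<in> Ar C" "Dom C h = Cod C u"
    and cc: "Cod C g = Cod C h" and eq: "Cp C g u = Cp C h u"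
  have gh: "g \<in> hom C K (Cod C g)" and hh: "h \<in> hom C K (Cod C g)" using g h u cc by (auto simp: hom_def)
  have "g = Cp C g (Cp C u k)" using uk id_right[OF C gh] by simp
  also have "\<dots> = Cp C (Cp C g u) k" using assoc[OF C k u gh] .
  also have "\<dots> = Cp C (Cp C h u) k" using eq by simp
  also have "\<dots> = Cp C h (Cp C u k)" using assoc[OF C k u hh] by simp
  also have "\<dots> = h" using uk id_right[OF C hh] by simp
  finally show "g = h" .
qed

lemma iso_epi:
  assumes C: "is_category C" and i: "iso C f" shows "epi C f"
proof -
  obtain g where g: "g \<in> hom C (Cod C f) (Dom C f)" "Cp C g f = Id C (Dom C f)" "Cp C f g = Id C (Cod C f)"
    using iso_inv[OF i] by blast
  have f: "f \<in> hom C (Dom C f) (Cod C f)" using i by (simp add: iso_def hom_def)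
  show ?thesis using retraction_epi[OF C f g(1) g(3)] .
qed

context ladj
begin

lemma SR_imp:
  assumes M: "M \<in> Ob CB" and N: "N \<in> Ob CB" and iM: "iso CB (eps M)" and iN: "iso CB (eps N)"
    and SR: "strongly_rickart CB M N"
  shows "dual_strongly_rickart CA (Ro N) (Ro M)"
    "\<forall>f\<in>hom CB M N. \<forall>k. is_kernel CB f k \<longrightarrow> cyclic CB M (Dom CB k)"
    "\<forall>f\<in>hom CB M N. \<forall>k. is_kernel CB f k \<longrightarrow> iso CB (eps (Dom CB k))"
proof -
  have sec: "\<exists>u\<in>hom CB M (Dom CB k). Cp CB u k = Id CB (Dom CB k)" and kh: "k \<in> hom CB (Dom CB k) M"
    and fi: "fully_invariant CB k"
    if f: "f \<in> hom CB M N" and k: "is_kernel CB f k" for f k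
  proof -
    have "section CB k" "fully_invariant CB k" using SR f k unfolding strongly_rickart_def by auto
    moreover have "Cod CB k = M" using k f by (simp add: is_kernel_def hom_def)
    ultimately show "\<exists>u\<in>hom CB M (Dom CB k). Cp CB u k = Id CB (Dom CB k)" "fully_invariant CB k"
      "k \<in> hom CB (Dom CB k) M"
      unfolding section_def by (auto simp: hom_def)
  qed
  show "\<forall>f\<in>hom CB M N. \<forall>k. is_kernel CB f k \<longrightarrow> cyclic CB M (Dom CB k)"
  proof (intro ballI allI impI)
    fix f k assume f: "f \<in> hom CB M N" and k: "is_kernel CB f k"
    obtain u where u: "u \<in> hom CB M (Dom CB k)" "Cp CB u k = Id CB (Dom CB k)" using sec[OF f k] by blast
    show "cyclic CB M (Dom CB k)" unfolding cyclic_def using u retraction_epi[OF catB u(1) kh[OF f k] u(2)] by blast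
  qed
  show "\<forall>f\<in>hom CB M N. \<forall>k. is_kernel CB f k \<longrightarrow> iso CB (eps (Dom CB k))"
  proof (intro ballI allI impI)
    fix f k assume f: "f \<in> hom CB M N" and k: "is_kernel CB f k"
    define K where "K = Dom CB k"
    obtain u where u: "u \<in> hom CB M K" "Cp CB u k = Id CB K" using sec[OF f k] K_def by blast
    have kh: "k \<in> hom CB K M" using kh[OF f k] K_def by simp
    have KO: "K \<in> Ob CB" using hom_Ob[OF catB kh] by simp
    obtain e where e: "e \<in> hom CB M (Lo (Ro M))" "Cp CB e (eps M) = Id CB (Lo (Ro M))" "Cp CB (eps M) e = Id CB M"
      using eps_iso_inv[OF M iM] by blast
    have eM: "eps M \<in> hom CB (Lo (Ro M)) M" and eK: "eps K \<in> hom CB (Lo (Ro K)) K" using eps_prop KO M by auto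
    have LRu: "Lm (Rm u) \<in> hom CB (Lo (Ro M)) (Lo (Ro K))" using cf_hom[OF L cf_hom[OF R u(1)]] .
    have LRk: "Lm (Rm k) \<in> hom CB (Lo (Ro K)) (Lo (Ro M))" using cf_hom[OF L cf_hom[OF R kh]] .
    define w where "w = Cp CB (Lm (Rm u)) (Cp CB e k)"
    have ek: "Cp CB e k \<in> hom CB K (Lo (Ro M))" using comp_hom[OF catB kh e(1)] .
    have wh: "w \<in> hom CB K (Lo (Ro K))" unfolding w_def using comp_hom[OF catB ek LRu] .
    have n1: "Cp CB (eps K) (Lm (Rm u)) = Cp CB u (eps M)" using eps_nat[OF M KO u(1)] .
    have n2: "Cp CB (eps M) (Lm (Rm k)) = Cp CB k (eps K)" using eps_nat[OF KO M kh] .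
    have 1: "Cp CB (eps K) w = Id CB K"
    proof -
      have "Cp CB (eps K) w = Cp CB (Cp CB (eps K) (Lm (Rm u))) (Cp CB e k)"
        unfolding w_def using assoc[OF catB ek LRu eK] .
      also have "\<dots> = Cp CB (Cp CB u (eps M)) (Cp CB e k)" using n1 by simp
      also have "\<dots> = Cp CB u (Cp CB (eps M) (Cp CB e k))" using assoc[OF catB ek eM u(1)] by simp
      also have "\<dots> = Cp CB u (Cp CB (Cp CB (eps M) e) k)" using assoc[OF catB kh e(1) eM] by simp
      also have "\<dots> = Cp CB u k" using e(3) id_left[OF catB kh] by simp
      finally show ?thesis using u(2) by simp
    qed
    have 2: "Cp CB w (eps K) = Id CB (Lo (Ro K))"
    proof -
      have ke: "Cp CB k (eps K) \<in> hom CB (Lo (Ro K)) M" using comp_hom[OF catB eK kh] .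
      have eke: "Cp CB e (Cp CB k (eps K)) \<in> hom CB (Lo (Ro K)) (Lo (Ro M))" using comp_hom[OF catB ke e(1)] .
      have "Cp CB w (eps K) = Cp CB (Lm (Rm u)) (Cp CB (Cp CB e k) (eps K))"
        unfolding w_def using assoc[OF catB eK ek LRu] by simp
      also have "\<dots> = Cp CB (Lm (Rm u)) (Cp CB e (Cp CB k (eps K)))" using assoc[OF catB eK kh e(1)] by simp
      also have "\<dots> = Cp CB (Lm (Rm u)) (Cp CB e (Cp CB (eps M) (Lm (Rm k))))" using n2 by simp
      also have "\<dots> = Cp CB (Lm (Rm u)) (Cp CB (Cp CB e (eps M)) (Lm (Rm k)))" using assoc[OF catB LRk eM e(1)] by simp
      also have "\<dots> = Cp CB (Lm (Rm u)) (Lm (Rm k))" using e(2) id_left[OF catB LRk] by simp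
      also have "\<dots> = Lm (Rm (Cp CB u k))"
        using cf_comp[OF R kh u(1)] cf_comp[OF L cf_hom[OF R u(1)] cf_hom[OF R kh]] by simp
      also have "\<dots> = Id CB (Lo (Ro K))" using u(2) cf_id[OF R KO] cf_id[OF L cf_Ob[OF R KO]] by simp
      finally show ?thesis .
    qed
    show "iso CB (eps (Dom CB k))" using isoI[OF eK wh 2 1] K_def by simp
  qed
  show "dual_strongly_rickart CA (Ro N) (Ro M)" unfolding dual_strongly_rickart_def
  proof (intro ballI allI impI)
    fix g c assume g: "g \<in> hom CA (Ro N) (Ro M)" and c: "is_cokernel CA g c"
    obtain f where f: "f \<in> hom CB M N" "Rm f = g" using full[OF M N iM g] by blast
    obtain k where k: "is_kernel CB f k" using kerB f by (auto simp: hom_def)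
    define K where "K = Dom CB k"
    obtain u where u: "u \<in> hom CB M K" "Cp CB u k = Id CB K" using sec[OF f(1) k] K_def by blast
    have kh: "k \<in> hom CB K M" using kh[OF f(1) k] K_def by simp
    have KO: "K \<in> Ob CB" using hom_Ob[OF catB kh] by simp
    have Rk: "Rm k \<in> hom CA (Ro M) (Ro K)" using cf_hom[OF R kh] .
    have Ru: "Rm u \<in> hom CA (Ro K) (Ro M)" using cf_hom[OF R u(1)] .
    have c2: "is_cokernel CA g (Rm k)" using R_coker[OF k] f(2) by simp
    obtain t t' where t: "t \<in> hom CA (Cod CA (Rm k)) (Cod CA c)" "t' \<in> hom CA (Cod CA c) (Cod CA (Rm k))"
      "Cp CA t (Rm k) = c" "Cp CA t' c = Rm k" "Cp CA t t' = Id CA (Cod CA c)" "Cp CA t' t = Id CA (Cod CA (Rm k))"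
      using cokernel_unique[OF catA c c2] by blast
    define Q where "Q = Cod CA c"
    have th: "t \<in> hom CA (Ro K) Q" and th': "t' \<in> hom CA Q (Ro K)" using t Rk by (auto simp: hom_def Q_def)
    have ch: "c \<in> hom CA (Ro M) Q" using comp_hom[OF catA Rk th] t(3) by simp
    have RkRu: "Cp CA (Rm k) (Rm u) = Id CA (Ro K)" using cf_comp[OF R kh u(1)] u(2) cf_id[OF R KO] by simp
    show "fully_coinvariant CA c \<and> retraction CA c"
    proof
      show "retraction CA c" unfolding retraction_def
      proof
        show "c \<in> Ar CA" using ch by (simp add: hom_def)
        have s: "Cp CA (Rm u) t' \<in> hom CA Q (Ro M)" using comp_hom[OF catA th' Ru] .
        have "Cp CA c (Cp CA (Rm u) t') = Cp CA t (Cp CA (Rm k) (Cp CA (Rm u) t'))"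
          using assoc[OF catA s Rk th] t(3) by simp
        also have "\<dots> = Cp CA t (Cp CA (Cp CA (Rm k) (Rm u)) t')" using assoc[OF catA th' Ru Rk] by simp
        also have "\<dots> = Id CA Q" using RkRu id_left[OF catA th'] t(5) Q_def by simp
        finally show "\<exists>f'\<in>hom CA (Cod CA c) (Dom CA c). Cp CA c f' = Id CA (Cod CA c)"
          using s ch by (auto simp: hom_def Q_def)
      qed
      show "fully_coinvariant CA c" unfolding fully_coinvariant_def
      proof (intro conjI ballI)
        show "epi CA c" using cokernel_epi[OF catA c] .
        fix h assume h0: "h \<in> hom CA (Dom CA c) (Dom CA c)"
        have h: "h \<in> hom CA (Ro M) (Ro M)" using h0 ch by (simp add: hom_def)
        obtain h' where h': "h' \<in> hom CB M M" "Rm h' = h" using full[OF M M iM h] by blast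
        have "fully_invariant CB k" using fi[OF f(1) k] .
        then obtain \<alpha> where a: "\<alpha> \<in> hom CB K K" "Cp CB h' k = Cp CB k \<alpha>"
          using h' kh unfolding fully_invariant_def by (auto simp: hom_def K_def)
        have Ra: "Rm \<alpha> \<in> hom CA (Ro K) (Ro K)" using cf_hom[OF R a(1)] .
        define \<gamma> where "\<gamma> = Cp CA t (Cp CA (Rm \<alpha>) t')"
        have gh: "\<gamma> \<in> hom CA Q Q" unfolding \<gamma>_def using comp_hom[OF catA comp_hom[OF catA th' Ra] th] .
        have eq: "Cp CA (Rm k) h = Cp CA (Rm \<alpha>) (Rm k)"
          using cf_comp[OF R kh h'(1)] cf_comp[OF R a(1) kh] a(2) h'(2) by simp
        have "Cp CA c h = Cp CA t (Cp CA (Rm k) h)" using assoc[OF catA h Rk th] t(3) by simp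
        also have "\<dots> = Cp CA t (Cp CA (Rm \<alpha>) (Rm k))" using eq by simp
        also have "\<dots> = Cp CA t (Cp CA (Rm \<alpha>) (Cp CA t' c))" using t(4) by simp
        also have "\<dots> = Cp CA t (Cp CA (Cp CA (Rm \<alpha>) t') c)" using assoc[OF catA ch th' Ra] by simp
        also have "\<dots> = Cp CA \<gamma> c" unfolding \<gamma>_def using assoc[OF catA ch comp_hom[OF catA th' Ra] th] by simp
        finally show "\<exists>\<gamma>\<in>hom CA (Cod CA c) (Cod CA c). Cp CA c h = Cp CA \<gamma> c" using gh Q_def by blast
      qed
    qed
  qed
qed


lemma SR_back:
  assumes M: "M \<in> Ob CB" and N: "N \<in> Ob CB" and iM: "iso CB (eps M)"
    and DSR: "dual_strongly_rickart CA (Ro N) (Ro M)"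
    and ep: "\<forall>f\<in>hom CB M N. \<forall>k. is_kernel CB f k \<longrightarrow> epi CB (eps (Dom CB k))"
  shows "strongly_rickart CB M N"
  unfolding strongly_rickart_def
proof (intro ballI allI impI)
  fix f k assume f: "f \<in> hom CB M N" and k: "is_kernel CB f k"
  define K where "K = Dom CB k"
  have kh: "k \<in> hom CB K M" using k f by (auto simp: is_kernel_def hom_def K_def)
  have KO: "K \<in> Ob CB" using hom_Ob[OF catB kh] by simp
  have eK: "epi CB (eps K)" using ep f k K_def by blast
  have Rf: "Rm f \<in> hom CA (Ro N) (Ro M)" using cf_hom[OF R f] .
  have Rk: "Rm k \<in> hom CA (Ro M) (Ro K)" using cf_hom[OF R kh] .
  have c: "is_cokernel CA (Rm f) (Rm k)" using R_coker[OF k] .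
  have fc: "fully_coinvariant CA (Rm k)" and rt: "retraction CA (Rm k)"
    using DSR Rf c unfolding dual_strongly_rickart_def by auto
  obtain s where s: "s \<in> hom CA (Ro K) (Ro M)" "Cp CA (Rm k) s = Id CA (Ro K)"
    using rt Rk unfolding retraction_def by (auto simp: hom_def)
  obtain e where e: "e \<in> hom CB M (Lo (Ro M))" "Cp CB e (eps M) = Id CB (Lo (Ro M))" "Cp CB (eps M) e = Id CB M"
    using eps_iso_inv[OF M iM] by blast
  have eM: "eps M \<in> hom CB (Lo (Ro M)) M" and eKh: "eps K \<in> hom CB (Lo (Ro K)) K" using eps_prop KO M by auto
  have Ls: "Lm s \<in> hom CB (Lo (Ro M)) (Lo (Ro K))" using cf_hom[OF L s(1)] .
  have LRk: "Lm (Rm k) \<in> hom CB (Lo (Ro K)) (Lo (Ro M))" using cf_hom[OF L Rk] .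
  define u where "u = Cp CB (eps K) (Cp CB (Lm s) e)"
  have Lse: "Cp CB (Lm s) e \<in> hom CB M (Lo (Ro K))" using comp_hom[OF catB e(1) Ls] .
  have uh: "u \<in> hom CB M K" unfolding u_def using comp_hom[OF catB Lse eKh] .
  have n2: "Cp CB (eps M) (Lm (Rm k)) = Cp CB k (eps K)" using eps_nat[OF KO M kh] .
  have uk: "Cp CB u k = Id CB K"
  proof -
    have ukh: "Cp CB u k \<in> hom CB K K" using comp_hom[OF catB kh uh] .
    have ke: "Cp CB k (eps K) \<in> hom CB (Lo (Ro K)) M" using comp_hom[OF catB eKh kh] .
    have "Cp CB (Cp CB u k) (eps K) = Cp CB u (Cp CB k (eps K))" using assoc[OF catB eKh kh uh] by simp
    also have "\<dots> = Cp CB u (Cp CB (eps M) (Lm (Rm k)))" using n2 by simp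
    also have "\<dots> = Cp CB (Cp CB u (eps M)) (Lm (Rm k))" using assoc[OF catB LRk eM uh] by simp
    also have "Cp CB u (eps M) = Cp CB (eps K) (Cp CB (Lm s) (Cp CB e (eps M)))"
      unfolding u_def using assoc[OF catB eM Lse eKh] assoc[OF catB eM e(1) Ls] by simp
    also have "\<dots> = Cp CB (eps K) (Lm s)" using e(2) id_right[OF catB Ls] by simp
    also have "Cp CB (Cp CB (eps K) (Lm s)) (Lm (Rm k)) = Cp CB (eps K) (Cp CB (Lm s) (Lm (Rm k)))"
      using assoc[OF catB LRk Ls eKh] by simp
    also have "Cp CB (Lm s) (Lm (Rm k)) = Lm (Cp CA (Rm k) s)" using cf_comp[OF L s(1) Rk] by simp
    also have "\<dots> = Id CB (Lo (Ro K))" using s(2) cf_id[OF L cf_Ob[OF R KO]] by simp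
    also have "Cp CB (eps K) (Id CB (Lo (Ro K))) = eps K" using id_right[OF catB eKh] .
    also have "eps K = Cp CB (Id CB K) (eps K)" using id_left[OF catB eKh] by simp
    finally have "Cp CB (Cp CB u k) (eps K) = Cp CB (Id CB K) (eps K)" .
    thus ?thesis using eK ukh id_hom[OF catB KO] eKh unfolding epi_def hom_def by auto
  qed
  show "fully_invariant CB k \<and> section CB k"
  proof
    show "section CB k" unfolding section_def using kh uh uk by (auto simp: hom_def)
    show "fully_invariant CB k" unfolding fully_invariant_def
    proof (intro conjI ballI)
      show "mono CB k" using kernel_mono[OF catB k] .
      fix h assume h0: "h \<in> hom CB (Cod CB k) (Cod CB k)"
      have h: "h \<in> hom CB M M" using h0 kh by (simp add: hom_def)
      have Rh: "Rm h \<in> hom CA (Ro M) (Ro M)" using cf_hom[OF R h] .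
      obtain \<gamma> where g: "\<gamma> \<in> hom CA (Ro K) (Ro K)" "Cp CA (Rm k) (Rm h) = Cp CA \<gamma> (Rm k)"
        using fc Rh Rk unfolding fully_coinvariant_def by (auto simp: hom_def)
      have ku: "Cp CB k u \<in> hom CB M M" using comp_hom[OF catB uh kh] .
      have hku: "Cp CB h (Cp CB k u) \<in> hom CB M M" using comp_hom[OF catB ku h] .
      define g where "g = Cp CB f (Cp CB h (Cp CB k u))"
      have gh: "g \<in> hom CB M N" unfolding g_def using comp_hom[OF catB hku f] .
      have Ru: "Rm u \<in> hom CA (Ro K) (Ro M)" using cf_hom[OF R uh] .
      have "Rm g = Cp CA (Rm (Cp CB h (Cp CB k u))) (Rm f)" unfolding g_def using cf_comp[OF R hku f] .
      also have "Rm (Cp CB h (Cp CB k u)) = Cp CA (Cp CA (Rm u) (Rm k)) (Rm h)"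
        using cf_comp[OF R ku h] cf_comp[OF R uh kh] by simp
      also have "\<dots> = Cp CA (Rm u) (Cp CA \<gamma> (Rm k))" using assoc[OF catA Rh Rk Ru] g(2) by simp
      also have "Cp CA (Cp CA (Rm u) (Cp CA \<gamma> (Rm k))) (Rm f) = Cp CA (Cp CA (Rm u) \<gamma>) (Cp CA (Rm k) (Rm f))"
        using assoc[OF catA Rf Rk comp_hom[OF catA g(1) Ru]] assoc[OF catA Rk g(1) Ru] by simp
      finally have Rg: "Rm g = Cp CA (Cp CA (Rm u) \<gamma>) (Cp CA (Rm k) (Rm f))" .
      have z0: "zero_arr CA (Cp CA (Rm k) (Rm f))" using c by (simp add: is_cokernel_def)
      have "zero_arr CA (Rm g)" using zero_arr_compL[OF catA z0] comp_hom[OF catA g(1) Ru] Rg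
          comp_hom[OF catA Rf Rk] by (simp add: hom_def)
      hence zg: "zero_arr CB g" using faithful_zero[OF M N iM gh] by simp
      have hk: "Cp CB h k \<in> hom CB K M" using comp_hom[OF catB kh h] .
      have "Cp CB g k = Cp CB f (Cp CB h k)"
      proof -
        have "Cp CB (Cp CB h (Cp CB k u)) k = Cp CB h (Cp CB (Cp CB k u) k)" using assoc[OF catB kh ku h] by simp
        also have "Cp CB (Cp CB k u) k = k" using assoc[OF catB kh uh kh] uk id_right[OF catB kh] by simp
        finally show ?thesis unfolding g_def using assoc[OF catB kh hku f] by simp
      qed
      moreover have "zero_arr CB (Cp CB g k)" using zero_arr_compR[OF catB zg] kh gh by (simp add: hom_def)
      ultimately have zfhk: "zero_arr CB (Cp CB f (Cp CB h k))" by simp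
      have "\<exists>!a. a \<in> hom CB (Dom CB (Cp CB h k)) (Dom CB k) \<and> Cp CB k a = Cp CB h k"
      proof (rule kernel_univ[OF k _ _ zfhk])
        show "Cp CB h k \<in> Ar CB" "Cod CB (Cp CB h k) = Dom CB f" using hk f by (auto simp: hom_def)
      qed
      then obtain a where "a \<in> hom CB K K" "Cp CB k a = Cp CB h k" using hk K_def by (auto simp: hom_def)
      thus "\<exists>\<alpha>\<in>hom CB (Dom CB k) (Dom CB k). Cp CB h k = Cp CB k \<alpha>" using K_def by (metis (no_types))
    qed
  qed
qed

lemma part1:
  assumes M: "M \<in> Ob CB" and N: "N \<in> Ob CB" and iM: "iso CB (eps M)" and iN: "iso CB (eps N)"
  shows "(strongly_rickart CB M N \<longleftrightarrow>
          dual_strongly_rickart CA (Ro N) (Ro M) \<and>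
          (\<forall>f\<in>hom CB M N. \<forall>k. is_kernel CB f k \<longrightarrow> cyclic CB M (Dom CB k))) \<and>
       (strongly_rickart CB M N \<longleftrightarrow>
          dual_strongly_rickart CA (Ro N) (Ro M) \<and>
          (\<forall>f\<in>hom CB M N. \<forall>k. is_kernel CB f k \<longrightarrow> iso CB (eps (Dom CB k))))"
proof -
  have c2e: "epi CB (eps (Dom CB k))" if f: "f \<in> hom CB M N" and k: "is_kernel CB f k"
    and cy: "cyclic CB M (Dom CB k)" for f k
  proof -
    define K where "K = Dom CB k"
    have kh: "k \<in> hom CB K M" using k f by (auto simp: is_kernel_def hom_def K_def)
    have KO: "K \<in> Ob CB" using hom_Ob[OF catB kh] by simp
    obtain p where p: "p \<in> hom CB M K" "epi CB p" using cy K_def unfolding cyclic_def by blast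
    obtain e where e: "e \<in> hom CB M (Lo (Ro M))" "Cp CB e (eps M) = Id CB (Lo (Ro M))" "Cp CB (eps M) e = Id CB M"
      using eps_iso_inv[OF M iM] by blast
    have eM: "eps M \<in> hom CB (Lo (Ro M)) M" and eKh: "eps K \<in> hom CB (Lo (Ro K)) K" using eps_prop KO M by auto
    have LRp: "Lm (Rm p) \<in> hom CB (Lo (Ro M)) (Lo (Ro K))" using cf_hom[OF L cf_hom[OF R p(1)]] .
    have n: "Cp CB (eps K) (Lm (Rm p)) = Cp CB p (eps M)" using eps_nat[OF M KO p(1)] .
    have "epi CB (eps K)" unfolding epi_def
    proof (intro conjI ballI impI)
      show "eps K \<in> Ar CB" using eKh by (simp add: hom_def)
      fix g h assume g: "g \<in> Ar CB" "Dom CB g = Cod CB (eps K)" and h: "h \<in> Ar CB" "Dom CB h = Cod CB (eps K)"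
        and cc: "Cod CB g = Cod CB h" and eq: "Cp CB g (eps K) = Cp CB h (eps K)"
      have gh: "g \<in> hom CB K (Cod CB g)" and hh: "h \<in> hom CB K (Cod CB g)" using g h eKh cc by (auto simp: hom_def)
      have X: "\<And>x. x \<in> hom CB K (Cod CB g) \<Longrightarrow> Cp CB (Cp CB x (eps K)) (Cp CB (Lm (Rm p)) e) = Cp CB x p"
      proof -
        fix x assume x: "x \<in> hom CB K (Cod CB g)"
        have "Cp CB (Cp CB x (eps K)) (Cp CB (Lm (Rm p)) e) = Cp CB x (Cp CB (Cp CB (eps K) (Lm (Rm p))) e)"
          using assoc[OF catB comp_hom[OF catB e(1) LRp] eKh x] assoc[OF catB e(1) LRp eKh] by simp
        also have "\<dots> = Cp CB x (Cp CB p (Cp CB (eps M) e))" using n assoc[OF catB e(1) eM p(1)] by simp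
        also have "\<dots> = Cp CB x p" using e(3) id_right[OF catB p(1)] by simp
        finally show "Cp CB (Cp CB x (eps K)) (Cp CB (Lm (Rm p)) e) = Cp CB x p" by simp
      qed
      have "Cp CB g p = Cp CB h p" using X[OF gh] X[OF hh] eq by simp
      thus "g = h" using p(2) gh hh p(1) unfolding epi_def hom_def by auto
    qed
    thus ?thesis using K_def by simp
  qed
  have i2e: "epi CB (eps (Dom CB k))" if "iso CB (eps (Dom CB k))" for k
    using iso_epi[OF catB that] .
  show ?thesis
    using SR_imp[OF M N iM iN] SR_back[OF M N iM] c2e i2e by blast
qed

end


definition op_cat :: "('o,'m) cat \<Rightarrow> ('o,'m) cat" where
  "op_cat C = \<lparr>Ob = Ob C, Ar = Ar C, Dom = Cod C, Cod = Dom C, Cp = (\<lambda>g f. Cp C f g), Id = Id C\<rparr>"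

lemma op_simps[simp]: "Ob (op_cat C) = Ob C" "Ar (op_cat C) = Ar C" "Dom (op_cat C) = Cod C"
  "Cod (op_cat C) = Dom C" "Cp (op_cat C) g f = Cp C f g" "Id (op_cat C) = Id C"
  by (simp_all add: op_cat_def)

lemma hom_op[simp]: "hom (op_cat C) A B = hom C B A"
  by (auto simp: hom_def)

lemma cat_op: "is_category C \<Longrightarrow> is_category (op_cat C)"
  unfolding is_category_def by (auto simp: hom_def)

lemma mono_op[simp]: "mono (op_cat C) f = epi C f"
  unfolding mono_def epi_def by auto

lemma epi_op[simp]: "epi (op_cat C) f = mono C f"
  unfolding mono_def epi_def by auto

lemma iso_op[simp]: "iso (op_cat C) f = iso C f"
  unfolding iso_def by auto

lemma section_op[simp]: "section (op_cat C) f = retraction C f"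
  unfolding section_def retraction_def by auto

lemma retraction_op[simp]: "retraction (op_cat C) f = section C f"
  unfolding section_def retraction_def by auto

lemma zero_obj_op[simp]: "zero_obj (op_cat C) Z = zero_obj C Z"
  unfolding zero_obj_def by auto

lemma zero_arr_op[simp]: "zero_arr (op_cat C) f = zero_arr C f"
  unfolding zero_arr_def by auto

lemma kernel_op[simp]: "is_kernel (op_cat C) f k = is_cokernel C f k"
  unfolding is_kernel_def is_cokernel_def by auto

lemma cokernel_op[simp]: "is_cokernel (op_cat C) f k = is_kernel C f k"
  unfolding is_kernel_def is_cokernel_def by auto

lemma fi_op[simp]: "fully_invariant (op_cat C) k = fully_coinvariant C k"
  unfolding fully_invariant_def fully_coinvariant_def by auto

lemma fci_op[simp]: "fully_coinvariant (op_cat C) k = fully_invariant C k"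
  unfolding fully_invariant_def fully_coinvariant_def by auto

lemma sr_op[simp]: "strongly_rickart (op_cat C) M N = dual_strongly_rickart C N M"
  unfolding strongly_rickart_def dual_strongly_rickart_def by auto

lemma dsr_op[simp]: "dual_strongly_rickart (op_cat C) M N = strongly_rickart C N M"
  unfolding strongly_rickart_def dual_strongly_rickart_def by auto

lemma cyclic_op[simp]: "cyclic (op_cat C) X Y = cocyclic C Y X"
  unfolding cyclic_def cocyclic_def by auto

lemma cf_op: "contra_functor C D Fo Fm \<Longrightarrow> contra_functor (op_cat C) (op_cat D) Fo Fm"
  unfolding contra_functor_def by (auto simp: hom_def)

lemma radj_op:
  assumes CA: "is_category CA" and CB: "is_category CB" and L: "contra_functor CA CB Lo Lm"
    and R: "contra_functor CB CA Ro Rm" and r: "right_adjoint_pair CA CB Lo Lm Ro Rm psi"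
  shows "left_adjoint_pair (op_cat CB) (op_cat CA) Ro Rm Lo Lm (\<lambda>A B. psi B A)"
  unfolding left_adjoint_pair_def
proof (intro conjI ballI)
  fix A B assume "A \<in> Ob (op_cat CB)" "B \<in> Ob (op_cat CA)"
  thus "bij_betw (psi B A) (hom (op_cat CA) (Ro A) B) (hom (op_cat CB) (Lo B) A)"
    using r unfolding right_adjoint_pair_def by simp
next
  fix A A' B B' a b g
  assume A: "A \<in> Ob (op_cat CB)" and A': "A' \<in> Ob (op_cat CB)" and B: "B \<in> Ob (op_cat CA)" and B': "B' \<in> Ob (op_cat CA)"
    and a: "a \<in> hom (op_cat CB) A A'" and b: "b \<in> hom (op_cat CA) B B'" and g: "g \<in> hom (op_cat CA) (Ro A) B"
  have a': "a \<in> hom CB A' A" and b': "b \<in> hom CA B' B" and g': "g \<in> hom CA B (Ro A)" using a b g by auto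
  have nat: "psi B' A' (Cp CA (Rm a) (Cp CA g b)) = Cp CB (Lm b) (Cp CB (psi B A g) a)"
    using r A A' B B' a' b' g' unfolding right_adjoint_pair_def by simp
  have Ra: "Rm a \<in> hom CA (Ro A) (Ro A')" using cf_hom[OF R a'] .
  have Lb: "Lm b \<in> hom CB (Lo B) (Lo B')" using cf_hom[OF L b'] .
  have pg: "psi B A g \<in> hom CB A (Lo B)"
    using r A B g' unfolding right_adjoint_pair_def bij_betw_def by auto
  show "psi B' A' (Cp (op_cat CA) b (Cp (op_cat CA) g (Rm a))) =
        Cp (op_cat CB) a (Cp (op_cat CB) (psi B A g) (Lm b))"
    using nat assoc[OF CA b' g' Ra] assoc[OF CB a' pg Lb] by simp
qed

lemma eps_op:
  "left_eps (op_cat CB) (op_cat CA) Ro Lo (\<lambda>A B. psi B A) B = right_eta CA CB Lo Ro psi B"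
  unfolding left_eps_def right_eta_def by simp



theorem theorem4p10:
  fixes CA :: "('a,'f) cat" and CB :: "('b,'g) cat"
    and Lo :: "'a \<Rightarrow> 'b" and Lm :: "'f \<Rightarrow> 'g"
    and Ro :: "'b \<Rightarrow> 'a" and Rm :: "'g \<Rightarrow> 'f"
  assumes "abelian CA" and "abelian CB"
    and "contra_functor CA CB Lo Lm" and "contra_functor CB CA Ro Rm"
  shows
   "(\<forall>phi M N. left_adjoint_pair CA CB Lo Lm Ro Rm phi \<and> M \<in> Ob CB \<and> N \<in> Ob CB \<and>
       iso CB (left_eps CA CB Lo Ro phi M) \<and> iso CB (left_eps CA CB Lo Ro phi N) \<longrightarrow>
       (strongly_rickart CB M N \<longleftrightarrow>
          dual_strongly_rickart CA (Ro N) (Ro M) \<and>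
          (\<forall>f\<in>hom CB M N. \<forall>k. is_kernel CB f k \<longrightarrow> cyclic CB M (Dom CB k))) \<and>
       (strongly_rickart CB M N \<longleftrightarrow>
          dual_strongly_rickart CA (Ro N) (Ro M) \<and>
          (\<forall>f\<in>hom CB M N. \<forall>k. is_kernel CB f k \<longrightarrow>
             iso CB (left_eps CA CB Lo Ro phi (Dom CB k))))) \<and>
    (\<forall>psi M N. right_adjoint_pair CA CB Lo Lm Ro Rm psi \<and> M \<in> Ob CA \<and> N \<in> Ob CA \<and>
       iso CA (right_eta CA CB Lo Ro psi M) \<and> iso CA (right_eta CA CB Lo Ro psi N) \<longrightarrow>
       (dual_strongly_rickart CA M N \<longleftrightarrow>
          strongly_rickart CB (Lo N) (Lo M) \<and>
          (\<forall>f\<in>hom CA M N. \<forall>c. is_cokernel CA f c \<longrightarrow> cocyclic CA (Cod CA c) N)) \<and>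
       (dual_strongly_rickart CA M N \<longleftrightarrow>
          strongly_rickart CB (Lo N) (Lo M) \<and>
          (\<forall>f\<in>hom CA M N. \<forall>c. is_cokernel CA f c \<longrightarrow>
             iso CA (right_eta CA CB Lo Ro psi (Cod CA c)))))"
proof (rule conjI; intro allI impI)
  have catA: "is_category CA" and catB: "is_category CB" using assms(1,2) by (auto simp: abelian_def)
  have zA: "\<exists>Z. zero_obj CA Z" and zB: "\<exists>Z. zero_obj CB Z" using assms(1,2) by (auto simp: abelian_def)
  have kerB: "\<forall>f\<in>Ar CB. \<exists>k. is_kernel CB f k" using assms(2) by (auto simp: abelian_def)
  have cokA: "\<forall>f\<in>Ar CA. \<exists>k. is_cokernel CA f k" using assms(1) by (auto simp: abelian_def)
  {
    fix phi M N
    assume h: "left_adjoint_pair CA CB Lo Lm Ro Rm phi \<and> M \<in> Ob CB \<and> N \<in> Ob CB \<and>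
       iso CB (left_eps CA CB Lo Ro phi M) \<and> iso CB (left_eps CA CB Lo Ro phi N)"
    interpret l: ladj CA CB Lo Lm Ro Rm phi
      using catA catB zA zB kerB assms(3,4) h by unfold_locales auto
    note r = l.part1[of M N]
    show "(strongly_rickart CB M N \<longleftrightarrow>
          dual_strongly_rickart CA (Ro N) (Ro M) \<and>
          (\<forall>f\<in>hom CB M N. \<forall>k. is_kernel CB f k \<longrightarrow> cyclic CB M (Dom CB k))) \<and>
       (strongly_rickart CB M N \<longleftrightarrow>
          dual_strongly_rickart CA (Ro N) (Ro M) \<and>
          (\<forall>f\<in>hom CB M N. \<forall>k. is_kernel CB f k \<longrightarrow>
             iso CB (left_eps CA CB Lo Ro phi (Dom CB k))))"
      using r h by blast
  }
  {
    fix psi M N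
    assume h: "right_adjoint_pair CA CB Lo Lm Ro Rm psi \<and> M \<in> Ob CA \<and> N \<in> Ob CA \<and>
       iso CA (right_eta CA CB Lo Ro psi M) \<and> iso CA (right_eta CA CB Lo Ro psi N)"
    have la: "left_adjoint_pair (op_cat CB) (op_cat CA) Ro Rm Lo Lm (\<lambda>A B. psi B A)"
      using radj_op[OF catA catB assms(3,4)] h by blast
    interpret l: ladj "op_cat CB" "op_cat CA" Ro Rm Lo Lm "\<lambda>A B. psi B A"
      using cat_op[OF catA] cat_op[OF catB] zA zB cokA cf_op[OF assms(3)] cf_op[OF assms(4)] la
      by unfold_locales auto
    note r = l.part1[of N M]
    show "(dual_strongly_rickart CA M N \<longleftrightarrow>
          strongly_rickart CB (Lo N) (Lo M) \<and>
          (\<forall>f\<in>hom CA M N. \<forall>c. is_cokernel CA f c \<longrightarrow> cocyclic CA (Cod CA c) N)) \<and>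
       (dual_strongly_rickart CA M N \<longleftrightarrow>
          strongly_rickart CB (Lo N) (Lo M) \<and>
          (\<forall>f\<in>hom CA M N. \<forall>c. is_cokernel CA f c \<longrightarrow>
             iso CA (right_eta CA CB Lo Ro psi (Cod CA c))))"
      using r[unfolded op_simps hom_op kernel_op cokernel_op sr_op dsr_op cyclic_op iso_op eps_op] h by blast
  }
qed


end
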